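(* If $P$ is a non-disjunctive labelled program (over a finite signature), then $\mathit{SM}(P)=\mathit{JM}(P)$.
   Context: Fix a finite non-empty set $\mathit{At}$ of propositional atoms. A labelled rule $r$ has the form $\ell : p_1 \vee \dots \vee p_m \leftarrow q_1 \wedge \dots \wedge q_n \wedge \neg s_1 \wedge \dots \wedge \neg s_j \wedge \neg\neg t_1 \wedge \dots \wedge \neg\neg t_k$ with $m,n,j,k \ge 0$ and atoms in $\mathit{At}$; $\mathit{Lb}(r)=\ell$, $\mathit{Hd}(r)=p_1\vee\dots\vee p_m$, $H(r)=\{p_1,\dots,p_m\}$, $\mathit{Bd}(r)$ is the whole antecedent, $\mathit{Bd}^+(r)=q_1\wedge\dots\wedge q_n$, $B^+(r)=\{q_1,\dots,q_n\}$, $\mathit{Bd}^-(r)=\neg s_1 \wedge \dots \wedge \neg s_j \wedge \neg\neg t_1 \wedge \dots \wedge \neg\neg t_k$. Empty disjunction is $\bot$, empty conjunction $\top$. A labelled program $P$ is a finite set of labelled rules with no repeated label; $\mathit{Lb}(P)$ is its set of labels. $P$ is non-disjunctive if $|H(r)|\le 1$ for every $r\in P$. An interpretation $I\subseteq\mathit{At}$ is a (classical) model of $P$ if $I\models \mathit{Bd}(r)\to\mathit{Hd}(r)$ for every $r\in P$. The reduct is $P^I=\{\ \mathit{Lb}(r): \mathit{Hd}(r) \leftarrow \mathit{Bd}^+(r) \mid r \in P,\ I \models \mathit{Bd}^-(r)\ \}$. $I$ is a stable model of $P$ if $I$ is a $\subseteq$-minimal classical model of $P^I$; $\mathit{SM}(P)$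 is the set of stable models. $\mathit{Sup}(I,P,p)=\{ r \in P \mid p \in H(r),\ I \models \mathit{Bd}(r)\}$. A support graph of a model $I$ under $P$ is a directed graph $G=\langle I,E,\lambda\rangle$ with vertex set $I$, edges $E\subseteq I\times I$ and a labelling $\lambda: I\to \mathit{Lb}(P)$ such that (i) $\lambda$ is injective, and (ii) for every $p\in I$, the rule $r\in P$ with $\mathit{Lb}(r)=\lambda(p)$ satisfies $r\in \mathit{Sup}(I,P,p)$ and $B^+(r)=\{q \mid (q,p)\in E\}$. An explanation is an acyclic support graph. A classical model $I$ of $P$ is a justified model if some explanation of $I$ under $P$ exists; $\mathit{JM}(P)$ is the set of justified models. *)

theory Defs
  imports Main
begin

text \<open>A rule
  l : p1 v ... v pm <- q1 & ... & qn & not s1 & ... & not sj & not not t1 & ... & not not tk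
  is represented by its label, head atoms H(r), positive body B+(r),
  negated atoms {s_i} and doubly negated atoms {t_i}.\<close>

record ('a, 'l) lrule =
  lbl  :: 'l
  hd   :: "'a set"
  pos  :: "'a set"
  neg  :: "'a set"
  nneg :: "'a set"

definition labelled_program :: "('a::finite, 'l) lrule set \<Rightarrow> bool" where
  "labelled_program P \<longleftrightarrow> finite P \<and> inj_on lbl P"

definition non_disjunctive :: "('a, 'l) lrule set \<Rightarrow> bool" where
  "non_disjunctive P \<longleftrightarrow> (\<forall>r\<in>P. card (hd r) \<le> 1)"

definition sat_neg_body :: "'a set \<Rightarrow> ('a, 'l) lrule \<Rightarrow> bool" where
  "sat_neg_body I r \<longleftrightarrow> neg r \<inter> I = {} \<and> nneg r \<subseteq> I"

definition sat_body :: "'a set \<Rightarrow> ('a, 'l) lrule \<Rightarrow> bool" where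
  "sat_body I r \<longleftrightarrow> pos r \<subseteq> I \<and> sat_neg_body I r"

definition sat_head :: "'a set \<Rightarrow> ('a, 'l) lrule \<Rightarrow> bool" where
  "sat_head I r \<longleftrightarrow> hd r \<inter> I \<noteq> {}"

definition is_model :: "('a, 'l) lrule set \<Rightarrow> 'a set \<Rightarrow> bool" where
  "is_model P I \<longleftrightarrow> (\<forall>r\<in>P. sat_body I r \<longrightarrow> sat_head I r)"

definition reduct :: "('a, 'l) lrule set \<Rightarrow> 'a set \<Rightarrow> ('a, 'l) lrule set" where
  "reduct P I = {\<lparr>lbl = lbl r, hd = hd r, pos = pos r, neg = {}, nneg = {}\<rparr> | r. r \<in> P \<and> sat_neg_body I r}"

definition stable_model :: "('a, 'l) lrule set \<Rightarrow> 'a set \<Rightarrow> bool" where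
  "stable_model P I \<longleftrightarrow> is_model (reduct P I) I \<and> (\<forall>J. J \<subset> I \<longrightarrow> \<not> is_model (reduct P I) J)"

definition SM :: "('a, 'l) lrule set \<Rightarrow> 'a set set" where
  "SM P = {I. stable_model P I}"

definition Sup_rules :: "'a set \<Rightarrow> ('a, 'l) lrule set \<Rightarrow> 'a \<Rightarrow> ('a, 'l) lrule set" where
  "Sup_rules I P p = {r \<in> P. p \<in> hd r \<and> sat_body I r}"

definition support_graph :: "('a, 'l) lrule set \<Rightarrow> 'a set \<Rightarrow> ('a \<times> 'a) set \<Rightarrow> ('a \<Rightarrow> 'l) \<Rightarrow> bool" where
  "support_graph P I E lam \<longleftrightarrow>
     E \<subseteq> I \<times> I \<and> lam ` I \<subseteq> lbl ` P \<and> inj_on lam I \<and>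
     (\<forall>p\<in>I. \<exists>r\<in>P. lbl r = lam p \<and> r \<in> Sup_rules I P p \<and> pos r = {q. (q, p) \<in> E})"

definition explanation :: "('a, 'l) lrule set \<Rightarrow> 'a set \<Rightarrow> ('a \<times> 'a) set \<Rightarrow> ('a \<Rightarrow> 'l) \<Rightarrow> bool" where
  "explanation P I E lam \<longleftrightarrow> support_graph P I E lam \<and> acyclic E"

definition justified_model :: "('a, 'l) lrule set \<Rightarrow> 'a set \<Rightarrow> bool" where
  "justified_model P I \<longleftrightarrow> is_model P I \<and> (\<exists>E lam. explanation P I E lam)"

definition JM :: "('a, 'l) lrule set \<Rightarrow> 'a set set" where
  "JM P = {I. justified_model P I}"

end

theory Submission
  imports Defs
begin

lemma red_mem:
  assumes "r \<in> P" "sat_neg_body I r"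
  shows "\<lparr>lbl = lbl r, hd = hd r, pos = pos r, neg = {}, nneg = {}\<rparr> \<in> reduct P I"
  using assms unfolding reduct_def by blast

lemma red_model_rule:
  assumes "is_model (reduct P I) J" "r \<in> P" "sat_neg_body I r" "pos r \<subseteq> J"
  shows "hd r \<inter> J \<noteq> {}"
proof -
  have "\<lparr>lbl = lbl r, hd = hd r, pos = pos r, neg = {}, nneg = {}\<rparr> \<in> reduct P I"
    using red_mem assms by blast
  with assms(1,4) show ?thesis
    unfolding is_model_def sat_body_def sat_neg_body_def sat_head_def by fastforce
qed

lemma model_red_of_model:
  assumes "is_model P I"
  shows "is_model (reduct P I) I"
  unfolding is_model_def
proof (intro ballI impI)
  fix r' assume "r' \<in> reduct P I" "sat_body I r'"
  then obtain r where r: "r \<in> P" "sat_neg_body I r"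
    "r' = \<lparr>lbl = lbl r, hd = hd r, pos = pos r, neg = {}, nneg = {}\<rparr>"
    unfolding reduct_def by blast
  with \<open>sat_body I r'\<close> have "sat_body I r" by (simp add: sat_body_def)
  with assms r show "sat_head I r'" unfolding is_model_def sat_head_def by auto
qed

lemma stable_model_of_red:
  assumes "is_model (reduct P I) I"
  shows "is_model P I"
  unfolding is_model_def
proof (intro ballI impI)
  fix r assume "r \<in> P" "sat_body I r"
  then show "sat_head I r" using red_model_rule[OF assms \<open>r \<in> P\<close>]
    by (auto simp: sat_body_def sat_head_def)
qed

lemma hd_single:
  fixes r :: "('a::finite, 'l) lrule"
  assumes "card (hd r) \<le> 1" "p \<in> hd r"
  shows "hd r = {p}"
proof -
  have "finite (hd r)" by simp
  with assms show ?thesis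
    using card_le_Suc0_iff_eq[of "hd r"] by auto
qed

lemma JM_SM:
  fixes P :: "('a::finite, 'l) lrule set"
  assumes nd: "non_disjunctive P" and jm: "justified_model P I"
  shows "stable_model P I"
proof -
  from jm obtain E lam where m: "is_model P I" and ex: "explanation P I E lam"
    unfolding justified_model_def by blast
  have sg: "support_graph P I E lam" and ac: "acyclic E"
    using ex unfolding explanation_def by auto
  have wfE: "wf E" using ac finite_acyclic_wf[of E] by simp
  have EI: "E \<subseteq> I \<times> I" using sg unfolding support_graph_def by auto
  have min: "\<not> is_model (reduct P I) J" if "J \<subset> I" for J
  proof
    assume jmod: "is_model (reduct P I) J"
    have "p \<in> I \<longrightarrow> p \<in> J" for p
    proof (induction p rule: wf_induct[OF wfE])
      case (1 p)
      show ?case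
      proof
        assume pI: "p \<in> I"
        then obtain r where r: "r \<in> P" "lbl r = lam p" "r \<in> Sup_rules I P p"
          "pos r = {q. (q, p) \<in> E}"
          using sg unfolding support_graph_def by blast
        have posJ: "pos r \<subseteq> J" using r(4) 1 EI by blast
        have pr: "p \<in> hd r" "sat_body I r" using r(3) unfolding Sup_rules_def by auto
        have "hd r = {p}" using hd_single[OF _ pr(1)] nd r(1) unfolding non_disjunctive_def by blast
        moreover have "hd r \<inter> J \<noteq> {}"
          using red_model_rule[OF jmod r(1) _ posJ] pr(2) by (simp add: sat_body_def)
        ultimately show "p \<in> J" by auto
      qed
    qed
    then show False using that by blast
  qed
  show ?thesis unfolding stable_model_def using model_red_of_model[OF m] min by blast
qed

lemma fin_chain:
  assumes "finite A" "A \<subseteq> (\<Union>n. D n)" "\<And>n. D n \<subseteq> D (Suc n)"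
  shows "\<exists>n. A \<subseteq> D n"
  using assms(1,2)
proof (induction A rule: finite_induct)
  case empty then show ?case by auto
next
  case (insert x F)
  then obtain n where n: "F \<subseteq> D n" by auto
  obtain m where m: "x \<in> D m" using insert by auto
  have mono: "D a \<subseteq> D b" if "a \<le> b" for a b
    using lift_Suc_mono_le[of D, OF assms(3) that] .
  have "insert x F \<subseteq> D (max n m)" using n m mono[of n "max n m"] mono[of m "max n m"] by auto
  then show ?case by blast
qed

lemma SM_JM:
  fixes P :: "('a::finite, 'l) lrule set"
  assumes lp: "labelled_program P" and nd: "non_disjunctive P" and sm: "stable_model P I"
  shows "justified_model P I"
proof -
  have rm: "is_model (reduct P I) I" and min: "\<And>J. J \<subset> I \<Longrightarrow> \<not> is_model (reduct P I) J"
    using sm unfolding stable_model_def by auto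
  have m: "is_model P I" using stable_model_of_red[OF rm] .
  define D where "D = rec_nat {} (\<lambda>_ S. {p. \<exists>r\<in>P. sat_neg_body I r \<and> hd r = {p} \<and> pos r \<subseteq> S})"
  have D0: "D 0 = {}" by (simp add: D_def)
  have DS: "D (Suc n) = {p. \<exists>r\<in>P. sat_neg_body I r \<and> hd r = {p} \<and> pos r \<subseteq> D n}" for n
    by (simp add: D_def)
  have Dmono: "D n \<subseteq> D (Suc n)" for n
  proof (induction n)
    case 0 then show ?case by (simp add: D0)
  next
    case (Suc n) then show ?case unfolding DS[of "Suc n"] DS[of n] by blast
  qed
  have DI: "D n \<subseteq> I" for n
  proof (induction n)
    case 0 then show ?case by (simp add: D0)
  next
    case (Suc n)
    show ?case
    proof
      fix p assume "p \<in> D (Suc n)"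
      then obtain r where r: "r \<in> P" "sat_neg_body I r" "hd r = {p}" "pos r \<subseteq> D n"
        unfolding DS by blast
      have "hd r \<inter> I \<noteq> {}" using red_model_rule[OF rm r(1,2)] r(4) Suc by blast
      then show "p \<in> I" using r(3) by auto
    qed
  qed
  define U where "U = (\<Union>n. D n)"
  have UI: "U \<subseteq> I" using DI unfolding U_def by blast
  have Umod: "is_model (reduct P I) U"
    unfolding is_model_def
  proof (intro ballI impI)
    fix r' assume "r' \<in> reduct P I" "sat_body U r'"
    then obtain r where r: "r \<in> P" "sat_neg_body I r"
      "r' = \<lparr>lbl = lbl r, hd = hd r, pos = pos r, neg = {}, nneg = {}\<rparr>"
      unfolding reduct_def by blast
    have posU: "pos r \<subseteq> U" using \<open>sat_body U r'\<close> r(3) by (simp add: sat_body_def)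
    then obtain n where n: "pos r \<subseteq> D n"
      using fin_chain[of "pos r" D] Dmono unfolding U_def by auto
    have "hd r \<inter> I \<noteq> {}" using red_model_rule[OF rm r(1,2)] posU UI by blast
    then obtain p where p: "p \<in> hd r" by blast
    have "card (hd r) \<le> 1" using nd r(1) unfolding non_disjunctive_def by blast
    then have "hd r = {p}" using hd_single p by blast
    then have "p \<in> D (Suc n)" unfolding DS using r n by blast
    then show "sat_head U r'" using r(3) p unfolding sat_head_def U_def by auto
  qed
  have UeqI: "U = I" using min[of U] Umod UI by blast
  define rk where "rk p = (LEAST n. p \<in> D n)" for p
  have rk1: "p \<in> D (rk p)" if "p \<in> I" for p
  proof -
    from that UeqI obtain n where "p \<in> D n" unfolding U_def by blast
    then show ?thesis unfolding rk_def by (rule LeastI)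
  qed
  have rk2: "rk p \<le> n" if "p \<in> D n" for p n
    unfolding rk_def using that by (rule Least_le)
  have rkpos: "rk p = Suc (rk p - 1)" if "p \<in> I" for p
    using rk1[OF that] D0 by (cases "rk p") auto
  define rp where "rp p = (SOME r. r\<in>P \<and> sat_neg_body I r \<and> hd r = {p} \<and> pos r \<subseteq> D (rk p - 1))" for p
  have rp: "rp p \<in> P \<and> sat_neg_body I (rp p) \<and> hd (rp p) = {p} \<and> pos (rp p) \<subseteq> D (rk p - 1)"
    if "p \<in> I" for p
  proof -
    have "p \<in> D (Suc (rk p - 1))" using rk1[OF that] rkpos[OF that] by simp
    then have "\<exists>r. r\<in>P \<and> sat_neg_body I r \<and> hd r = {p} \<and> pos r \<subseteq> D (rk p - 1)"
      unfolding DS by blast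
    then show ?thesis unfolding rp_def by (rule someI_ex)
  qed
  define E where "E = {(q, p). p \<in> I \<and> q \<in> pos (rp p)}"
  define lam where "lam p = lbl (rp p)" for p
  have Esub: "E \<subseteq> inv_image less_than rk"
  proof
    fix x assume "x \<in> E"
    then obtain q p where x: "x = (q, p)" "p \<in> I" "q \<in> pos (rp p)" unfolding E_def by blast
    then have "q \<in> D (rk p - 1)" using rp by blast
    then have "rk q \<le> rk p - 1" by (rule rk2)
    then show "x \<in> inv_image less_than rk" using x rkpos[OF x(2)] by simp
  qed
  have ac: "acyclic E"
    by (rule wf_acyclic, rule wf_subset[OF _ Esub], simp)
  have EII: "E \<subseteq> I \<times> I"
  proof
    fix x assume "x \<in> E"
    then obtain q p where x: "x = (q, p)" "p \<in> I" "q \<in> pos (rp p)" unfolding E_def by blast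
    then show "x \<in> I \<times> I" using rp[OF x(2)] DI by blast
  qed
  have inj: "inj_on lam I"
  proof
    fix p p' assume "p \<in> I" "p' \<in> I" "lam p = lam p'"
    then have "rp p = rp p'" using lp rp unfolding labelled_program_def lam_def inj_on_def by metis
    then show "p = p'" using rp \<open>p \<in> I\<close> \<open>p' \<in> I\<close> by (metis singleton_inject)
  qed
  have sg: "support_graph P I E lam"
    unfolding support_graph_def
  proof (intro conjI ballI)
    show "E \<subseteq> I \<times> I" by (rule EII)
    show "lam ` I \<subseteq> lbl ` P" using rp unfolding lam_def by blast
    show "inj_on lam I" by (rule inj)
  next
    fix p assume pI: "p \<in> I"
    have "rp p \<in> Sup_rules I P p"
      using rp[OF pI] DI unfolding Sup_rules_def sat_body_def by blast
    moreover have "pos (rp p) = {q. (q, p) \<in> E}" using pI unfolding E_def by auto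
    ultimately show "\<exists>r\<in>P. lbl r = lam p \<and> r \<in> Sup_rules I P p \<and> pos r = {q. (q, p) \<in> E}"
      using rp[OF pI] unfolding lam_def by blast
  qed
  show ?thesis unfolding justified_model_def explanation_def using m sg ac by blast
qed

theorem theorem2:
  fixes P :: "('a::finite, 'l) lrule set"
  assumes "labelled_program P"
    and "non_disjunctive P"
  shows "SM P = JM P"
  using SM_JM[OF assms] JM_SM[OF assms(2)] unfolding SM_def JM_def by blast

end
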